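(* Let $p$ be an odd prime, let $q\in\mathbb{C}_p$ with $|1-q|_p<1$, let $h\in\mathbb{Z}$, $r\in\mathbb{N}$, $n\ge 0$, and let $w_1,w_2\in\mathbb{N}$ with $w_1\equiv 1\pmod 2$ and $w_2\equiv 1\pmod 2$. Then, for $x\in\mathbb{Z}_p$, \[ \begin{split} &[w_1]_q^n\sum_{j_1,\dots,j_r=0}^{w_1-1}(-1)^{\sum_{l=1}^r j_l}\,q^{w_2\sum_{l=1}^r(h-l)j_l}\,E_{n,q^{w_1}}^{(h,r)}\!\left(w_2x+\tfrac{w_2}{w_1}(j_1+\cdots+j_r)\right)\\ &=[w_2]_q^n\sum_{j_1,\dots,j_r=0}^{w_2-1}(-1)^{\sum_{l=1}^r j_l}\,q^{w_1\sum_{l=1}^r(h-l)j_l}\,E_{n,q^{w_2}}^{(h,r)}\!\left(w_1x+\tfrac{w_1}{w_2}(j_1+\cdots+j_r)\right). \end{split} \]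
   Context: $\mathbb{Z}_p$ denotes the $p$-adic integers and $\mathbb{C}_p$ the completion of the algebraic closure of $\mathbb{Q}_p$. For $q\in\mathbb{C}_p$ with $|1-q|_p<1$, the $q$-number is $[x]_q=\frac{1-q^x}{1-q}$; for $w\in\mathbb{N}$, $[z]_{q^w}=\frac{1-q^{wz}}{1-q^w}$ (in all occurrences the exponent $wz$ is a $p$-adic integer). For a continuous function $f$ on $\mathbb{Z}_p$, the $p$-adic fermionic integral is $\int_{\mathbb{Z}_p}f(y)\,d\mu_{-1}(y)=\lim_{N\to\infty}\sum_{y=0}^{p^N-1}f(y)(-1)^y$; the multivariate integral over $y_1,\dots,y_r$ is the iterated one. For $h\in\mathbb{Z}$, $r\in\mathbb{N}$, the expansions of $q$-Euler polynomials $E_{n,q}^{(h,r)}(x)$ are defined by \[ E_{n,q}^{(h,r)}(x)=\int_{\mathbb{Z}_p}\!\cdots\!\int_{\mathbb{Z}_p} q^{\sum_{l=1}^r(h-l)y_l}\,[x+y_1+\cdots+y_r]_q^n\,d\mu_{-1}(y_1)\cdots d\mu_{-1}(y_r), \] equivalently by the generating function $\sum_{n\ge0}E_{n,q}^{(h,r)}(x)\frac{t^n}{n!}=2^r\sum_{m_1,\dots,m_r=0}^{\infty}q^{\sum_{l=1}^r(h-l)m_l}(-1)^{\sum_{l=1}^r m_l}e^{[x+m_1+\cdots+m_r]_q t}$. With base $q^{w}$ in place of $q$, this means $E_{n,q^{w}}^{(h,r)}(z)=\int\cdots\int q^{w\sum_{l}(h-l)y_l}[z+y_1+\cdots+y_r]_{q^{w}}^n\,d\mu_{-1}(y_1)\cdots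 d\mu_{-1}(y_r)$. *)

theory Defs
  imports Complex_Main "HOL-Library.FuncSet" "HOL-Computational_Algebra.Primes"
begin

text \<open>We model C_p by an arbitrary field K carrying a
  non-archimedean absolute value nv which is complete, algebraically closed and restricts to
  the p-adic absolute value on the rationals (nv p = 1/p).  Z_p is realised inside K as the
  closure of the integers.\<close>

definition nonarch_abs :: "('a::field \<Rightarrow> real) \<Rightarrow> bool" where
  "nonarch_abs nv \<longleftrightarrow> (\<forall>x. 0 \<le> nv x) \<and> (\<forall>x. nv x = 0 \<longleftrightarrow> x = 0)
     \<and> (\<forall>x y. nv (x * y) = nv x * nv y) \<and> (\<forall>x y. nv (x + y) \<le> max (nv x) (nv y))"

definition nv_tendsto :: "('a::field \<Rightarrow> real) \<Rightarrow> (nat \<Rightarrow> 'a) \<Rightarrow> 'a \<Rightarrow> bool" where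
  "nv_tendsto nv f L \<longleftrightarrow> (\<forall>e>0. \<exists>N. \<forall>m\<ge>N. nv (f m - L) < e)"

definition nv_cauchy :: "('a::field \<Rightarrow> real) \<Rightarrow> (nat \<Rightarrow> 'a) \<Rightarrow> bool" where
  "nv_cauchy nv f \<longleftrightarrow> (\<forall>e>0. \<exists>N. \<forall>m\<ge>N. \<forall>k\<ge>N. nv (f m - f k) < e)"

definition nv_lim :: "('a::field \<Rightarrow> real) \<Rightarrow> (nat \<Rightarrow> 'a) \<Rightarrow> 'a" where
  "nv_lim nv f = (THE L. nv_tendsto nv f L)"

definition is_Cp_model :: "nat \<Rightarrow> ('a::field \<Rightarrow> real) \<Rightarrow> bool" where
  "is_Cp_model p nv \<longleftrightarrow> nonarch_abs nv \<and> nv (of_nat p) = 1 / real p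
     \<and> (\<forall>f. nv_cauchy nv f \<longrightarrow> (\<exists>L. nv_tendsto nv f L))
     \<and> (\<forall>n>0. \<forall>c::nat \<Rightarrow> 'a. c n \<noteq> 0 \<longrightarrow> (\<exists>z. (\<Sum>i\<le>n. c i * z ^ i) = 0))"

definition Zp :: "('a::field \<Rightarrow> real) \<Rightarrow> 'a set" where
  "Zp nv = {x. \<exists>s::nat \<Rightarrow> int. nv_tendsto nv (\<lambda>m. of_int (s m)) x}"

definition qpow :: "('a::field \<Rightarrow> real) \<Rightarrow> 'a \<Rightarrow> 'a \<Rightarrow> 'a" where
  "qpow nv q x = (THE L. \<forall>s::nat \<Rightarrow> int. nv_tendsto nv (\<lambda>m. of_int (s m)) x
                      \<longrightarrow> nv_tendsto nv (\<lambda>m. q powi s m) L)"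

text \<open>q-number with base q^w, given the (p-adic integer) exponent a = w z:
  [z]_{q^w} = (1 - q^(wz)) / (1 - q^w).\<close>
definition qnum :: "('a::field \<Rightarrow> real) \<Rightarrow> 'a \<Rightarrow> nat \<Rightarrow> 'a \<Rightarrow> 'a" where
  "qnum nv q w a = (1 - qpow nv q a) / (1 - q ^ w)"

definition fint :: "nat \<Rightarrow> ('a::field \<Rightarrow> real) \<Rightarrow> ('a \<Rightarrow> 'a) \<Rightarrow> 'a" where
  "fint p nv f = nv_lim nv (\<lambda>N. \<Sum>y<p ^ N. f (of_nat y) * (- 1) ^ y)"

text \<open>Iterated fermionic integral over the variables y 0, ..., y (r-1)
  (y l stands for y_(l+1) of the paper).\<close>
fun fint_multi :: "nat \<Rightarrow> ('a::field \<Rightarrow> real) \<Rightarrow> nat \<Rightarrow> ((nat \<Rightarrow> 'a) \<Rightarrow> 'a) \<Rightarrow> 'a" where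
  "fint_multi p nv 0 F = F (\<lambda>_. 0)"
| "fint_multi p nv (Suc r) F = fint_multi p nv r (\<lambda>ys. fint p nv (\<lambda>y. F (ys(r := y))))"

text \<open>Eq p nv q w h r n a = E^{(h,r)}_{n,q^w}(z) where a = w z (a p-adic integer).\<close>
definition Eq :: "nat \<Rightarrow> ('a::field \<Rightarrow> real) \<Rightarrow> 'a \<Rightarrow> nat \<Rightarrow> int \<Rightarrow> nat \<Rightarrow> nat \<Rightarrow> 'a \<Rightarrow> 'a" where
  "Eq p nv q w h r n a = fint_multi p nv r (\<lambda>y.
      qpow nv q (of_nat w * (\<Sum>l<r. of_int (h - int (l + 1)) * y l))
      * (qnum nv q w (a + of_nat w * (\<Sum>l<r. y l))) ^ n)"

end

theory Submission imports Defs begin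

lemma alt_geom0:
  fixes z :: "'a::field"
  assumes "odd n" "1 + z \<noteq> 0" shows "(\<Sum>y<n. (- z) ^ y) = (1 + z ^ n) / (1 + z)"
proof -
  have "- z \<noteq> 1" using assms(2) by (metis add.inverse_inverse neg_eq_iff_add_eq_0)
  then have "(\<Sum>y<n. (- z) ^ y) = ((- z) ^ n - 1) / (- z - 1)"
    by (rule geometric_sum)
  also have "(- z) ^ n - 1 = - (1 + z ^ n)" using assms(1) by simp
  also have "- z - 1 = - (1 + z)" by simp
  finally show ?thesis by (simp only: minus_divide_divide)
qed

lemma powi_sum:
  fixes x :: "'a::field" assumes "x \<noteq> 0"
  shows "x powi (\<Sum>l\<in>A. f l) = (\<Prod>l\<in>A. x powi (f l))"
proof (induction A rule: infinite_finite_induct)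
  case (insert a A) then show ?case using assms by (simp add: power_int_add)
qed simp_all

lemma aux_alg:
  fixes d :: "'a::field"
  assumes "d \<noteq> 0" "e \<noteq> 0"
  shows "(d / e) ^ n * (A * (c * (X * Y) / d ^ n * P)) = c * X / e ^ n * P * (A * Y)"
  using assms by (simp add: power_divide field_simps)

locale cpm =
  fixes p :: nat and nv :: "'a::field \<Rightarrow> real" and q :: 'a
  assumes prime: "prime p" and oddp: "odd p" and model: "is_Cp_model p nv"
    and q1: "nv (1 - q) < 1"
begin

lemma na: "nonarch_abs nv" using model unfolding is_Cp_model_def by blast
lemma nvp: "nv (of_nat p) = 1 / real p" using model unfolding is_Cp_model_def by blast
lemma complete: "nv_cauchy nv f \<Longrightarrow> \<exists>L. nv_tendsto nv f L" using model unfolding is_Cp_model_def by blast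

lemma nv_ge0[simp]: "0 \<le> nv x" using na unfolding nonarch_abs_def by blast
lemma nv_eq0[simp]: "nv x = 0 \<longleftrightarrow> x = 0" using na unfolding nonarch_abs_def by blast
lemma nv_mult: "nv (x * y) = nv x * nv y" using na unfolding nonarch_abs_def by blast
lemma nv_add: "nv (x + y) \<le> max (nv x) (nv y)" using na unfolding nonarch_abs_def by blast

lemma nv1[simp]: "nv 1 = 1"
proof -
  have "nv 1 = nv 1 * nv 1" using nv_mult[of 1 1] by simp
  moreover have "nv 1 \<noteq> 0" by simp
  ultimately show ?thesis by (metis mult_cancel_left1)
qed

lemma nv0[simp]: "nv 0 = 0" by simp

lemma nv_minus1: "nv (-1) = 1"
proof -
  have "nv (-1) * nv (-1) = 1" using nv_mult[of "-1" "-1"] by simp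
  then have "(nv (-1) - 1) * (nv (-1) + 1) = 0" by (simp add: algebra_simps)
  moreover have "nv (-1) + 1 > 0" using nv_ge0[of "-1"] by linarith
  ultimately show ?thesis by simp
qed

lemma nv_minus[simp]: "nv (- x) = nv x"
  using nv_mult[of "-1" x] nv_minus1 by simp

lemma nv_diff: "nv (x - y) \<le> max (nv x) (nv y)"
  using nv_add[of x "-y"] by simp

lemma nv_commute: "nv (x - y) = nv (y - x)"
  by (metis minus_diff_eq nv_minus)

lemma nv_inverse: "nv (inverse x) = inverse (nv x)"
proof (cases "x = 0")
  case False
  have "nv x * nv (inverse x) = nv (x * inverse x)" by (simp only: nv_mult)
  also have "\<dots> = 1" using False by simp
  finally show ?thesis by (metis inverse_unique)
qed simp

lemma nv_divide: "nv (x / y) = nv x / nv y"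
  by (simp add: divide_inverse nv_mult nv_inverse)

lemma nv_power: "nv (x ^ n) = nv x ^ n"
  by (induction n) (simp_all add: nv_mult)

lemma nv_sum_le:
  assumes "finite A" "\<And>i. i \<in> A \<Longrightarrow> nv (f i) \<le> B" "0 \<le> B"
  shows "nv (\<Sum>i\<in>A. f i) \<le> B"
  using assms
proof (induction A rule: finite_induct)
  case (insert a A)
  then have "nv (f a) \<le> B" "nv (sum f A) \<le> B" by auto
  then show ?case using nv_add[of "f a" "sum f A"] insert.hyps by simp
qed simp

lemma nv_trans_max: "nv (x - z) \<le> max (nv (x - y)) (nv (y - z))"
  using nv_add[of "x - y" "y - z"] by simp

lemma nv_of_nat_le: "nv (of_nat n) \<le> 1"
proof (induction n)
  case (Suc n) then show ?case using nv_add[of 1 "of_nat n"] by (simp add: add.commute)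
qed simp

lemma nv_of_int_le: "nv (of_int z) \<le> 1"
proof -
  have "of_int z = (of_nat (nat z) :: 'a) \<or> of_int z = - (of_nat (nat (-z)) :: 'a)"
    by (cases "z \<ge> 0") auto
  then show ?thesis using nv_of_nat_le by (metis nv_minus)
qed

lemma nv_strict:
  assumes "nv b < nv a" shows "nv (a + b) = nv a"
proof -
  have "nv a \<le> max (nv (a + b)) (nv b)" using nv_diff[of "a+b" b] by simp
  then have "nv a \<le> nv (a + b)" using assms by auto
  moreover have "nv (a + b) \<le> nv a" using nv_add[of a b] assms by auto
  ultimately show ?thesis by simp
qed

lemma p_gt1: "p > 1" using prime prime_gt_1_nat by blast

lemma nv_coprime:
  assumes "\<not> int p dvd u" shows "nv (of_int u) = 1"
proof -
  have "coprime (int p) u" using assms prime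
    by (simp add: prime_imp_coprime_int prime_nat_iff_prime)
  then obtain a b where ab: "a * u + b * int p = 1"
    using bezout_int[of u "int p"] by (metis coprime_imp_gcd_eq_1 gcd.commute)
  have "1 = nv (of_int (a * u + b * int p))" using ab by simp
  also have "\<dots> \<le> max (nv (of_int a) * nv (of_int u)) (nv (of_int b) * (1 / real p))"
    using nv_add[of "of_int a * of_int u" "of_int b * of_nat p"] by (simp add: nv_mult nvp)
  also have "\<dots> \<le> max (nv (of_int u)) (1 / real p)"
  proof (intro max.mono)
    show "nv (of_int a) * nv (of_int u) \<le> nv (of_int u)"
      using nv_of_int_le[of a] by (intro mult_left_le_one_le) auto
    show "nv (of_int b) * (1 / real p) \<le> 1 / real p"
      using nv_of_int_le[of b] p_gt1 by (intro mult_left_le_one_le) auto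
  qed
  finally have "1 \<le> max (nv (of_int u)) (1 / real p)" .
  moreover have "1 / real p < 1" using p_gt1 by simp
  ultimately have "1 \<le> nv (of_int u)" by linarith
  then show ?thesis using nv_of_int_le[of u] by simp
qed

lemma nv_dvd: "nv (of_int z) < (1 / real p) ^ e \<Longrightarrow> int p ^ e dvd z"
proof (induction e arbitrary: z)
  case (Suc e)
  have "int p dvd z"
  proof (rule ccontr)
    assume "\<not> int p dvd z"
    then have "nv (of_int z) = 1" by (rule nv_coprime)
    moreover have "(1 / real p) ^ Suc e \<le> 1" using p_gt1 by (intro power_le_one) auto
    ultimately show False using Suc.prems by simp
  qed
  then obtain z' where z': "z = int p * z'" by blast
  have "nv (of_int z) = nv (of_int z') / real p" using z' by (simp add: nv_mult nvp)
  then have "nv (of_int z') = real p * nv (of_int z)" using p_gt1 by simp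
  also have "\<dots> < real p * (1 / real p) ^ Suc e"
    using Suc.prems p_gt1 by (intro mult_strict_left_mono) auto
  also have "\<dots> = (1 / real p) ^ e" using p_gt1 by simp
  finally have "nv (of_int z') < (1 / real p) ^ e" .
  then have "int p ^ e dvd z'" by (rule Suc.IH)
  then show ?case using z' by simp
qed simp

definition "t0 = nv (q - 1)"
definition "rho = max (1 / real p) t0"

lemma t0_lt1: "t0 < 1" using q1 nv_commute unfolding t0_def by metis
lemma t0_ge0: "0 \<le> t0" unfolding t0_def by simp
lemma rho_lt1: "rho < 1" using t0_lt1 p_gt1 unfolding rho_def by simp
lemma rho_gt0: "0 < rho" using p_gt1 unfolding rho_def by (simp add: max.strict_coboundedI1)

lemma nv_near1: "nv (u - 1) < 1 \<Longrightarrow> nv u = 1"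
  using nv_strict[of "u - 1" 1] by simp

lemma nv_q: "nv q = 1" using nv_near1 t0_lt1 unfolding t0_def by simp
lemma q_nz: "q \<noteq> 0" using nv_q by auto

lemma nv_powi1: "nv u = 1 \<Longrightarrow> nv (u powi k) = 1"
  by (simp add: power_int_def nv_power nv_inverse)

lemma nv_qpowi[simp]: "nv (q powi k) = 1" using nv_q nv_powi1 by blast

lemma pow_sub1: assumes "nv u \<le> 1" shows "nv (u ^ i - 1) \<le> nv (u - 1)"
proof -
  have "nv (\<Sum>j<i. u ^ j) \<le> 1"
    using assms by (intro nv_sum_le) (auto simp: nv_power power_le_one)
  then have "nv (u - 1) * nv (\<Sum>j<i. u ^ j) \<le> nv (u - 1)"
    by (intro mult_right_le_one_le) auto
  then show ?thesis by (simp add: power_diff_1_eq nv_mult)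
qed

lemma powi_sub1: assumes "nv (u - 1) < 1" shows "nv (u powi m - 1) \<le> nv (u - 1)"
proof (cases "m \<ge> 0")
  case True
  then show ?thesis using pow_sub1[of u "nat m"] nv_near1[OF assms]
    by (simp add: power_int_def)
next
  case False
  define k where "k = nat (-m)"
  have u1: "nv u = 1" using nv_near1[OF assms] .
  then have unz: "u \<noteq> 0" by auto
  have "u powi m = inverse (u ^ k)" using False unfolding k_def by (simp add: power_int_def power_inverse)
  then have "u powi m - 1 = inverse (u ^ k) * (1 - u ^ k)"
    using unz by (simp add: field_simps)
  then have "nv (u powi m - 1) = nv (1 - u ^ k)" using u1 by (simp add: nv_mult nv_inverse nv_power)
  also have "\<dots> = nv (u ^ k - 1)" by (rule nv_commute)
  also have "\<dots> \<le> nv (u - 1)" using pow_sub1 u1 by simp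
  finally show ?thesis .
qed

lemma pow_p_step:
  assumes "nv (u - 1) < 1"
  shows "nv (u ^ p - 1) \<le> nv (u - 1) * max (1 / real p) (nv (u - 1))"
proof -
  have u1: "nv u = 1" using nv_near1[OF assms] .
  have "(\<Sum>i<p. u ^ i) = of_nat p + (\<Sum>i<p. (u ^ i - 1))"
    by (simp add: sum_subtractf)
  moreover have "nv (\<Sum>i<p. (u ^ i - 1)) \<le> max (1 / real p) (nv (u - 1))"
    using pow_sub1 u1 by (intro nv_sum_le) (auto intro: max.coboundedI2)
  ultimately have "nv (\<Sum>i<p. u ^ i) \<le> max (1 / real p) (nv (u - 1))"
    using nv_add[of "of_nat p" "\<Sum>i<p. (u ^ i - 1)"] nvp by simp
  then show ?thesis
    by (simp add: power_diff_1_eq nv_mult mult_left_mono)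
qed

lemma pow_pe: "nv (q ^ (p ^ e) - 1) \<le> t0 * rho ^ e"
proof (induction e)
  case 0 then show ?case by (simp add: t0_def)
next
  case (Suc e)
  define u where "u = q ^ (p ^ e)"
  have "t0 * rho ^ e \<le> t0" using rho_lt1 rho_gt0 t0_ge0
    by (simp add: mult_left_le power_le_one)
  then have s: "nv (u - 1) \<le> t0" using Suc unfolding u_def by linarith
  then have s1: "nv (u - 1) < 1" using t0_lt1 by linarith
  have "q ^ (p ^ Suc e) = q ^ (p ^ e * p)" by (simp add: mult.commute)
  then have "q ^ (p ^ Suc e) = u ^ p" unfolding u_def by (simp only: power_mult)
  then have "nv (q ^ (p ^ Suc e) - 1) \<le> nv (u - 1) * max (1 / real p) (nv (u - 1))"
    using pow_p_step[OF s1] by simp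
  also have "\<dots> \<le> nv (u - 1) * rho"
    using s unfolding rho_def by (intro mult_left_mono) auto
  also have "\<dots> \<le> t0 * rho ^ e * rho"
    using Suc rho_gt0 unfolding u_def by (intro mult_right_mono) auto
  finally show ?case by (simp add: ac_simps)
qed

lemma powi_pe: "nv (q powi (int (p ^ e) * m) - 1) \<le> t0 * rho ^ e"
proof -
  define u where "u = q ^ (p ^ e)"
  have "t0 * rho ^ e \<le> t0" using rho_lt1 rho_gt0 t0_ge0
    by (simp add: mult_left_le power_le_one)
  then have s: "nv (u - 1) \<le> t0 * rho ^ e" "nv (u - 1) < 1"
    using pow_pe[of e] t0_lt1 unfolding u_def by linarith+
  have "q powi (int (p ^ e) * m) = (q powi (int (p ^ e))) powi m" by (rule power_int_mult)
  also have "\<dots> = u powi m" by (simp only: power_int_of_nat u_def)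
  finally have "q powi (int (p ^ e) * m) = u powi m" .
  then show ?thesis using powi_sub1[OF s(2), of m] s(1) by simp
qed

lemma powi_small: "nv (q powi t - 1) \<le> t0"
  using powi_pe[of 0 t] by simp

lemma cont: assumes "0 < eps" shows "\<exists>e. \<forall>t. int p ^ e dvd t \<longrightarrow> nv (q powi t - 1) < eps"
proof -
  obtain e where e: "rho ^ e < eps" using real_arch_pow_inv[OF assms rho_lt1] by blast
  have "t0 * rho ^ e \<le> rho ^ e" using t0_lt1 t0_ge0 rho_gt0 by (intro mult_left_le_one_le) auto
  then have "\<forall>t. int p ^ e dvd t \<longrightarrow> nv (q powi t - 1) < eps"
    using e powi_pe[of e] by (auto simp: dvd_def) (metis order.strict_trans1)
  then show ?thesis by blast
qed

lemma tendsto_unique: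
  assumes "nv_tendsto nv f L" "nv_tendsto nv f M" shows "L = M"
proof (rule ccontr)
  assume "L \<noteq> M"
  then have d: "nv (L - M) > 0" by (metis less_eq_real_def nv_eq0 nv_ge0 right_minus_eq)
  obtain N1 where N1: "\<forall>m\<ge>N1. nv (f m - L) < nv (L - M)" using assms(1) d unfolding nv_tendsto_def by blast
  obtain N2 where N2: "\<forall>m\<ge>N2. nv (f m - M) < nv (L - M)" using assms(2) d unfolding nv_tendsto_def by blast
  define m where "m = max N1 N2"
  have "nv (L - M) \<le> max (nv (L - f m)) (nv (f m - M))" by (rule nv_trans_max)
  also have "\<dots> < nv (L - M)" using N1 N2 nv_commute[of L "f m"] unfolding m_def by auto
  finally show False by simp
qed

lemma nv_lim_eq: "nv_tendsto nv f L \<Longrightarrow> nv_lim nv f = L"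
  unfolding nv_lim_def using tendsto_unique by blast

lemma tendsto_const: "nv_tendsto nv (\<lambda>m. c) c"
  unfolding nv_tendsto_def by simp

lemma tendsto_add:
  assumes "nv_tendsto nv f L" "nv_tendsto nv g M"
  shows "nv_tendsto nv (\<lambda>m. f m + g m) (L + M)"
  unfolding nv_tendsto_def
proof (intro allI impI)
  fix e :: real assume e: "e > 0"
  obtain N1 where N1: "\<forall>m\<ge>N1. nv (f m - L) < e" using assms(1) e unfolding nv_tendsto_def by blast
  obtain N2 where N2: "\<forall>m\<ge>N2. nv (g m - M) < e" using assms(2) e unfolding nv_tendsto_def by blast
  have "\<forall>m\<ge>max N1 N2. nv (f m + g m - (L + M)) < e"
  proof (intro allI impI)
    fix m assume "m \<ge> max N1 N2"
    then have "nv (f m - L) < e" "nv (g m - M) < e" using N1 N2 by auto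
    moreover have eq: "f m + g m - (L + M) = (f m - L) + (g m - M)" by simp
    ultimately show "nv (f m + g m - (L + M)) < e" using nv_add[of "f m - L" "g m - M"]
      by (subst eq) (meson max_less_iff_conj order_le_less_trans)
  qed
  then show "\<exists>N. \<forall>m\<ge>N. nv (f m + g m - (L + M)) < e" by blast
qed

lemma tendsto_cmult:
  assumes "nv_tendsto nv f L"
  shows "nv_tendsto nv (\<lambda>m. c * f m) (c * L)"
proof (cases "c = 0")
  case True then show ?thesis by (simp add: tendsto_const)
next
  case False
  then have c: "nv c > 0" by (simp add: order_le_neq_trans[OF nv_ge0] )
  show ?thesis unfolding nv_tendsto_def
  proof (intro allI impI)
    fix e :: real assume e: "e > 0"
    obtain N where N: "\<forall>m\<ge>N. nv (f m - L) < e / nv c"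
      using assms e c unfolding nv_tendsto_def by (meson divide_pos_pos)
    have "\<forall>m\<ge>N. nv (c * f m - c * L) < e"
    proof (intro allI impI)
      fix m assume "m \<ge> N"
      then have "nv (f m - L) < e / nv c" using N by auto
      then have "nv c * nv (f m - L) < e" using c by (simp add: field_simps)
      moreover have "c * f m - c * L = c * (f m - L)" by (simp add: algebra_simps)
      ultimately show "nv (c * f m - c * L) < e" by (simp add: nv_mult)
    qed
    then show "\<exists>N. \<forall>m\<ge>N. nv (c * f m - c * L) < e" by blast
  qed
qed

lemma tendsto_sum:
  assumes "finite K" "\<And>k. k \<in> K \<Longrightarrow> nv_tendsto nv (f k) (L k)"
  shows "nv_tendsto nv (\<lambda>m. \<Sum>k\<in>K. f k m) (\<Sum>k\<in>K. L k)"
  using assms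
proof (induction K rule: finite_induct)
  case empty then show ?case by (simp add: tendsto_const)
next
  case (insert a K)
  then show ?case using tendsto_add[of "f a" "L a" "\<lambda>m. \<Sum>k\<in>K. f k m" "sum L K"] by simp
qed

lemma close_lemma:
  assumes "0 < eps"
  shows "\<exists>d>0. \<forall>a b::int. nv (of_int a - of_int b) < d \<longrightarrow> nv (q powi a - q powi b) < eps"
proof -
  obtain e where e: "\<forall>t. int p ^ e dvd t \<longrightarrow> nv (q powi t - 1) < eps" using cont[OF assms] by blast
  have "\<forall>a b::int. nv (of_int a - of_int b) < (1 / real p) ^ e \<longrightarrow> nv (q powi a - q powi b) < eps"
  proof (intro allI impI)
    fix a b :: int assume "nv (of_int a - of_int b) < (1 / real p) ^ e"
    then have "int p ^ e dvd (a - b)" using nv_dvd[of "a - b" e] by simp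
    then have "nv (q powi (a - b) - 1) < eps" using e by blast
    moreover have "q powi a - q powi b = q powi b * (q powi (a - b) - 1)"
      using q_nz by (simp add: power_int_diff field_simps)
    ultimately show "nv (q powi a - q powi b) < eps" by (simp add: nv_mult)
  qed
  moreover have "(1 / real p) ^ e > 0" using p_gt1 by simp
  ultimately show ?thesis by blast
qed

lemma qpow_ex:
  assumes "x \<in> Zp nv"
  shows "\<exists>L. \<forall>s. nv_tendsto nv (\<lambda>m. of_int (s m)) x \<longrightarrow> nv_tendsto nv (\<lambda>m. q powi s m) L"
proof -
  obtain s0 where s0: "nv_tendsto nv (\<lambda>m. of_int (s0 m)) x" using assms unfolding Zp_def by blast
  have "nv_cauchy nv (\<lambda>m. q powi s0 m)" unfolding nv_cauchy_def
  proof (intro allI impI)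
    fix e :: real assume e: "e > 0"
    obtain d where d: "d > 0" "\<forall>a b::int. nv (of_int a - of_int b) < d \<longrightarrow> nv (q powi a - q powi b) < e"
      using close_lemma[OF e] by blast
    obtain N where N: "\<forall>m\<ge>N. nv (of_int (s0 m) - x) < d" using s0 d unfolding nv_tendsto_def by blast
    have "\<forall>m\<ge>N. \<forall>k\<ge>N. nv (q powi s0 m - q powi s0 k) < e"
    proof (intro allI impI)
      fix m k assume "m \<ge> N" "k \<ge> N"
      then have "nv (of_int (s0 m) - x) < d" "nv (x - of_int (s0 k)) < d" using N nv_commute by auto
      then have "nv (of_int (s0 m) - of_int (s0 k)) < d" using nv_trans_max[of "of_int (s0 m)" "of_int (s0 k)" x] by auto
      then show "nv (q powi s0 m - q powi s0 k) < e" using d by blast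
    qed
    then show "\<exists>N. \<forall>m\<ge>N. \<forall>k\<ge>N. nv (q powi s0 m - q powi s0 k) < e" by blast
  qed
  then obtain L where L: "nv_tendsto nv (\<lambda>m. q powi s0 m) L" using complete by blast
  have "\<forall>s. nv_tendsto nv (\<lambda>m. of_int (s m)) x \<longrightarrow> nv_tendsto nv (\<lambda>m. q powi s m) L"
  proof (intro allI impI)
    fix s assume s: "nv_tendsto nv (\<lambda>m. of_int (s m)) x"
    show "nv_tendsto nv (\<lambda>m. q powi s m) L" unfolding nv_tendsto_def
    proof (intro allI impI)
      fix e :: real assume e: "e > 0"
      obtain d where d: "d > 0" "\<forall>a b::int. nv (of_int a - of_int b) < d \<longrightarrow> nv (q powi a - q powi b) < e"
        using close_lemma[OF e] by blast
      obtain N1 where N1: "\<forall>m\<ge>N1. nv (of_int (s0 m) - x) < d" using s0 d unfolding nv_tendsto_def by blast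
      obtain N2 where N2: "\<forall>m\<ge>N2. nv (of_int (s m) - x) < d" using s d unfolding nv_tendsto_def by blast
      obtain N3 where N3: "\<forall>m\<ge>N3. nv (q powi s0 m - L) < e" using L e unfolding nv_tendsto_def by blast
      have "\<forall>m\<ge>max N1 (max N2 N3). nv (q powi s m - L) < e"
      proof (intro allI impI)
        fix m assume m: "m \<ge> max N1 (max N2 N3)"
        then have "nv (of_int (s m) - x) < d" "nv (x - of_int (s0 m)) < d" using N1 N2 nv_commute by auto
        then have "nv (of_int (s m) - of_int (s0 m)) < d" using nv_trans_max[of "of_int (s m)" "of_int (s0 m)" x] by auto
        then have "nv (q powi s m - q powi s0 m) < e" using d by blast
        moreover have "nv (q powi s0 m - L) < e" using N3 m by auto
        ultimately show "nv (q powi s m - L) < e" using nv_trans_max[of "q powi s m" L "q powi s0 m"] by auto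
      qed
      then show "\<exists>N. \<forall>m\<ge>N. nv (q powi s m - L) < e" by blast
    qed
  qed
  then show ?thesis by blast
qed

lemma qpow_tendsto:
  assumes "x \<in> Zp nv" "nv_tendsto nv (\<lambda>m. of_int (s m)) x"
  shows "nv_tendsto nv (\<lambda>m. q powi s m) (qpow nv q x)"
proof -
  obtain L where L: "\<forall>s. nv_tendsto nv (\<lambda>m. of_int (s m)) x \<longrightarrow> nv_tendsto nv (\<lambda>m. q powi s m) L"
    using qpow_ex[OF assms(1)] by blast
  obtain s0 where s0: "nv_tendsto nv (\<lambda>m. of_int (s0 m)) x" using assms(1) unfolding Zp_def by blast
  have "qpow nv q x = L" unfolding qpow_def
  proof (rule the_equality)
    show "\<forall>s. nv_tendsto nv (\<lambda>m. of_int (s m)) x \<longrightarrow> nv_tendsto nv (\<lambda>m. q powi s m) L" by (rule L)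
  next
    fix M assume "\<forall>s. nv_tendsto nv (\<lambda>m. of_int (s m)) x \<longrightarrow> nv_tendsto nv (\<lambda>m. q powi s m) M"
    then show "M = L" using L s0 tendsto_unique by blast
  qed
  then show ?thesis using L assms(2) by simp
qed

lemma Zp_int: "of_int k \<in> Zp nv"
  unfolding Zp_def using tendsto_const[of "of_int k"] by (intro CollectI exI[of _ "\<lambda>m. k"]) simp

lemma qpow_int: "qpow nv q (of_int k) = q powi k"
  using qpow_tendsto[OF Zp_int, of "\<lambda>m. k" k] tendsto_const tendsto_unique by simp

lemma Zp_shift:
  assumes "X \<in> Zp nv" "nv_tendsto nv (\<lambda>m. of_int (s m)) X"
  shows "nv_tendsto nv (\<lambda>m. of_int (s m + k)) (X + of_int k)"
  using assms(2) unfolding nv_tendsto_def by simp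

lemma qpow_shift:
  assumes "X \<in> Zp nv" shows "qpow nv q (X + of_int k) = qpow nv q X * q powi k"
proof -
  obtain s where s: "nv_tendsto nv (\<lambda>m. of_int (s m)) X" using assms unfolding Zp_def by blast
  have s': "nv_tendsto nv (\<lambda>m. of_int (s m + k)) (X + of_int k)" using Zp_shift[OF assms s] .
  then have Z: "X + of_int k \<in> Zp nv" unfolding Zp_def by (intro CollectI exI[of _ "\<lambda>m. s m + k"])
  have "nv_tendsto nv (\<lambda>m. q powi (s m + k)) (qpow nv q (X + of_int k))"
    using qpow_tendsto[OF Z s'] .
  moreover have "nv_tendsto nv (\<lambda>m. q powi k * q powi (s m)) (q powi k * qpow nv q X)"
    using tendsto_cmult[OF qpow_tendsto[OF assms s]] .
  moreover have "(\<lambda>m. q powi (s m + k)) = (\<lambda>m. q powi k * q powi (s m))"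
    using q_nz by (simp add: power_int_add mult.commute)
  ultimately show ?thesis using tendsto_unique by (metis mult.commute)
qed

lemma Zp_mult:
  assumes "x \<in> Zp nv" shows "of_nat c * x \<in> Zp nv"
proof -
  obtain s where s: "nv_tendsto nv (\<lambda>m. of_int (s m)) x" using assms unfolding Zp_def by blast
  have "nv_tendsto nv (\<lambda>m. of_nat c * of_int (s m)) (of_nat c * x)" by (rule tendsto_cmult[OF s])
  then have "nv_tendsto nv (\<lambda>m. of_int (int c * s m)) (of_nat c * x)" by simp
  then show ?thesis unfolding Zp_def by (intro CollectI exI[of _ "\<lambda>m. int c * s m"])
qed

lemma nv2: "nv (2::'a) = 1"
proof -
  have "p \<noteq> 2" using oddp by auto
  then have "p > 2" using p_gt1 by linarith
  then have "\<not> int p dvd 2" using zdvd_imp_le[of "int p" 2] by auto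
  then show ?thesis using nv_coprime[of 2] by simp
qed

lemma nv_1plus: "nv (1 + q powi m) = 1"
proof -
  have "nv (q powi m - 1) < nv (2::'a)" using powi_small[of m] t0_lt1 nv2 by linarith
  then have "nv (2 + (q powi m - 1)) = 1" using nv_strict nv2 by metis
  moreover have "(2::'a) + (q powi m - 1) = 1 + q powi m" by simp
  ultimately show ?thesis by simp
qed

lemma onep_nz: "1 + q powi m \<noteq> 0" using nv_1plus[of m] by auto

lemma zpow_lim: "nv_tendsto nv (\<lambda>N. (q powi m) ^ (p ^ N)) 1"
  unfolding nv_tendsto_def
proof (intro allI impI)
  fix eps :: real assume "eps > 0"
  then obtain e where e: "\<forall>t. int p ^ e dvd t \<longrightarrow> nv (q powi t - 1) < eps" using cont by blast
  have "\<forall>N\<ge>e. nv ((q powi m) ^ (p ^ N) - 1) < eps"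
  proof (intro allI impI)
    fix N assume "N \<ge> e"
    then have "int p ^ e dvd m * int (p ^ N)" by (simp add: le_imp_power_dvd)
    then have "nv (q powi (m * int (p ^ N)) - 1) < eps" using e by blast
    then show "nv ((q powi m) ^ (p ^ N) - 1) < eps" by (simp add: power_int_power')
  qed
  then show "\<exists>N. \<forall>n\<ge>N. nv ((q powi m) ^ (p ^ n) - 1) < eps" by blast
qed

lemma alt_geom:
  assumes "odd n" shows "(\<Sum>y<n. (- (q powi m)) ^ y) = (1 + (q powi m) ^ n) / (1 + q powi m)"
  using alt_geom0[OF assms onep_nz[of m]] .

lemma fint_exp:
  assumes "finite K" "\<And>t. f (of_nat t) = (\<Sum>k\<in>K. A k * (q powi m k) ^ t)"
  shows "fint p nv f = (\<Sum>k\<in>K. 2 * A k / (1 + q powi m k))"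
proof -
  have part: "(\<Sum>y<p ^ N. f (of_nat y) * (- 1) ^ y) =
      (\<Sum>k\<in>K. A k / (1 + q powi m k) * (1 + (q powi m k) ^ (p ^ N)))" for N
  proof -
    have "f (of_nat y) * (- 1) ^ y = (\<Sum>k\<in>K. A k * (- (q powi m k)) ^ y)" for y
    proof -
      have "f (of_nat y) * (- 1) ^ y = (\<Sum>k\<in>K. A k * (q powi m k) ^ y * (- 1) ^ y)"
        unfolding assms(2) by (rule sum_distrib_right)
      also have "\<dots> = (\<Sum>k\<in>K. A k * (- (q powi m k)) ^ y)"
      proof (intro sum.cong refl)
        fix k show "A k * (q powi m k) ^ y * (- 1) ^ y = A k * (- (q powi m k)) ^ y"
          using power_minus[of "q powi m k" y] by (simp only: mult_ac)
      qed
      finally show ?thesis .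
    qed
    then have "(\<Sum>y<p ^ N. f (of_nat y) * (- 1) ^ y) = (\<Sum>y<p ^ N. \<Sum>k\<in>K. A k * (- (q powi m k)) ^ y)"
      by simp
    also have "\<dots> = (\<Sum>k\<in>K. \<Sum>y<p ^ N. A k * (- (q powi m k)) ^ y)"
      by (rule sum.swap)
    also have "\<dots> = (\<Sum>k\<in>K. A k * (\<Sum>y<p ^ N. (- (q powi m k)) ^ y))"
      by (simp only: sum_distrib_left)
    also have "\<dots> = (\<Sum>k\<in>K. A k / (1 + q powi m k) * (1 + (q powi m k) ^ (p ^ N)))"
      using oddp by (intro sum.cong refl) (simp add: alt_geom)
    finally show ?thesis .
  qed
  have "nv_tendsto nv (\<lambda>N. \<Sum>k\<in>K. A k / (1 + q powi m k) * (1 + (q powi m k) ^ (p ^ N)))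
          (\<Sum>k\<in>K. A k / (1 + q powi m k) * (1 + 1))"
    by (intro tendsto_sum assms(1) tendsto_cmult tendsto_add tendsto_const zpow_lim)
  moreover have "(\<Sum>k\<in>K. A k / (1 + q powi m k) * (1 + 1)) = (\<Sum>k\<in>K. 2 * A k / (1 + q powi m k))"
    by (intro sum.cong refl) (simp add: field_simps onep_nz)
  ultimately have "nv_tendsto nv (\<lambda>N. \<Sum>y<p ^ N. f (of_nat y) * (- 1) ^ y) (\<Sum>k\<in>K. 2 * A k / (1 + q powi m k))"
    by (simp only: part)
  then show ?thesis unfolding fint_def by (rule nv_lim_eq)
qed

lemma fint_multi_exp:
  assumes "finite K"
  shows "(\<And>v. F (\<lambda>l. of_nat (v l)) = (\<Sum>k\<in>K. a k * (\<Prod>l<r. (q powi m k l) ^ v l)))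
     \<Longrightarrow> fint_multi p nv r F = (\<Sum>k\<in>K. a k * (\<Prod>l<r. 2 / (1 + q powi m k l)))"
proof (induction r arbitrary: F a)
  case 0
  have "F (\<lambda>_. 0) = F (\<lambda>l. of_nat ((\<lambda>_. 0::nat) l))" by simp
  also have "\<dots> = (\<Sum>k\<in>K. a k * (\<Prod>l<0. (q powi m k l) ^ ((\<lambda>_. 0::nat) l)))" by (rule 0)
  finally show ?case by simp
next
  case (Suc r)
  define F' where "F' = (\<lambda>ys. fint p nv (\<lambda>y. F (ys(r := y))))"
  have "F' (\<lambda>l. of_nat (v l)) = (\<Sum>k\<in>K. (a k * (2 / (1 + q powi m k r))) * (\<Prod>l<r. (q powi m k l) ^ v l))" for v
  proof -
    have upd: "(\<lambda>l. of_nat (v l))(r := of_nat t) = (\<lambda>l. of_nat ((v(r := t)) l))" for t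
      by auto
    then have "F ((\<lambda>l. of_nat (v l))(r := of_nat t)) = (\<Sum>k\<in>K. (a k * (\<Prod>l<r. (q powi m k l) ^ v l)) * (q powi m k r) ^ t)" for t
    proof -
      have "F ((\<lambda>l. of_nat (v l))(r := of_nat t)) = F (\<lambda>l. of_nat ((v(r := t)) l))"
        by (simp only: upd)
      also have "\<dots> = (\<Sum>k\<in>K. a k * (\<Prod>l<Suc r. (q powi m k l) ^ (v(r := t)) l))"
        by (rule Suc.prems)
      also have "\<dots> = (\<Sum>k\<in>K. (a k * (\<Prod>l<r. (q powi m k l) ^ v l)) * (q powi m k r) ^ t)"
        by (intro sum.cong refl) (simp add: mult.assoc)
      finally show ?thesis .
    qed
    then have "F' (\<lambda>l. of_nat (v l)) = (\<Sum>k\<in>K. 2 * (a k * (\<Prod>l<r. (q powi m k l) ^ v l)) / (1 + q powi m k r))"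
      unfolding F'_def by (intro fint_exp assms)
    also have "\<dots> = (\<Sum>k\<in>K. (a k * (2 / (1 + q powi m k r))) * (\<Prod>l<r. (q powi m k l) ^ v l))"
      by (intro sum.cong refl) (simp add: field_simps)
    finally show ?thesis .
  qed
  then have "fint_multi p nv r F' = (\<Sum>k\<in>K. (a k * (2 / (1 + q powi m k r))) * (\<Prod>l<r. 2 / (1 + q powi m k l)))"
    by (rule Suc.IH)
  moreover have "fint_multi p nv (Suc r) F = fint_multi p nv r F'" unfolding F'_def by simp
  ultimately show ?case by (simp add: mult_ac)
qed

lemma Eq_closed:
  assumes X: "X \<in> Zp nv"
  shows "Eq p nv q w h r n (X + of_int S) =
    (\<Sum>k\<le>n. (of_nat (n choose k) * (- (qpow nv q X * q powi S)) ^ k / (1 - q ^ w) ^ n)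
        * (\<Prod>l<r. 2 / (1 + q powi (int w * (h - int (l + 1) + int k)))))"
  unfolding Eq_def
proof (rule fint_multi_exp[OF finite_atMost])
  fix v :: "nat \<Rightarrow> nat"
  define E where "E = (\<Sum>l<r. (h - int (l + 1)) * int (v l))"
  define V where "V = (\<Sum>l<r. v l)"
  define Q where "Q = qpow nv q X"
  define d where "d = 1 - q ^ w"
  define B where "B = Q * q powi S * q powi (int w * int V)"
  have a1: "of_nat w * (\<Sum>l<r. of_int (h - int (l + 1)) * (of_nat (v l) :: 'a)) = of_int (int w * E)"
    unfolding E_def by simp
  have a2: "X + of_int S + of_nat w * (\<Sum>l<r. (of_nat (v l) :: 'a)) = X + of_int (S + int w * int V)"
    unfolding V_def by simp
  have qn: "qnum nv q w (X + of_int S + of_nat w * (\<Sum>l<r. of_nat (v l))) = (1 - B) / d"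
    unfolding qnum_def a2 qpow_shift[OF X] B_def Q_def d_def
    using q_nz by (simp add: power_int_add mult.assoc)
  have bin: "(1 - B) ^ n = (\<Sum>k\<le>n. of_nat (n choose k) * (- B) ^ k)"
    using binomial_ring[of "- B" 1 n] by simp
  have prodk: "(\<Prod>l<r. (q powi (int w * (h - int (l + 1) + int k))) ^ v l)
      = q powi (int w * E) * (q powi (int w * int V)) ^ k" for k
  proof -
    have "(\<Prod>l<r. (q powi (int w * (h - int (l + 1) + int k))) ^ v l)
        = (\<Prod>l<r. q powi (int w * (h - int (l + 1) + int k) * int (v l)))"
      by (simp add: power_int_power')
    also have "\<dots> = q powi (\<Sum>l<r. int w * (h - int (l + 1) + int k) * int (v l))"
      using q_nz by (simp add: powi_sum)
    also have "(\<Sum>l<r. int w * (h - int (l + 1) + int k) * int (v l))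
        = (\<Sum>l<r. int w * ((h - int (l + 1)) * int (v l)) + int w * int k * int (v l))"
      by (intro sum.cong refl) (simp add: algebra_simps)
    also have "\<dots> = int w * E + int w * int V * int k"
      unfolding E_def V_def sum.distrib by (simp add: sum_distrib_left of_nat_sum mult_ac)
    also have "q powi (int w * E + int w * int V * int k) = q powi (int w * E) * (q powi (int w * int V)) ^ k"
      using q_nz by (simp add: power_int_add power_int_power')
    finally show ?thesis .
  qed
  have "qpow nv q (of_nat w * (\<Sum>l<r. of_int (h - int (l + 1)) * of_nat (v l))) *
        qnum nv q w (X + of_int S + of_nat w * (\<Sum>l<r. of_nat (v l))) ^ n
      = q powi (int w * E) * ((1 - B) ^ n / d ^ n)"
    unfolding a1 qpow_int qn by (simp add: power_divide)
  also have "\<dots> = (\<Sum>k\<le>n. (of_nat (n choose k) * (- (Q * q powi S)) ^ k / d ^ n)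
        * (q powi (int w * E) * (q powi (int w * int V)) ^ k))"
  proof -
    have negB: "(- B) ^ k = (- (Q * q powi S)) ^ k * (q powi (int w * int V)) ^ k" for k
    proof -
      have "- B = (- (Q * q powi S)) * q powi (int w * int V)" unfolding B_def by simp
      then show ?thesis by (simp only: power_mult_distrib)
    qed
    show ?thesis unfolding bin negB
      by (simp add: sum_distrib_left sum_divide_distrib mult_ac)
  qed
  also have "\<dots> = (\<Sum>k\<le>n. (of_nat (n choose k) * (- (Q * q powi S)) ^ k / d ^ n)
        * (\<Prod>l<r. (q powi (int w * (h - int (l + 1) + int k))) ^ v l))"
    by (simp only: prodk)
  finally show "qpow nv q (of_nat w * (\<Sum>l<r. of_int (h - int (l + 1)) * of_nat (v l))) *
        qnum nv q w (X + of_int S + of_nat w * (\<Sum>l<r. of_nat (v l))) ^ n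
      = (\<Sum>k\<le>n. (of_nat (n choose k) * (- (qpow nv q X * q powi S)) ^ k / (1 - q ^ w) ^ n)
        * (\<Prod>l<r. (q powi (int w * (h - int (l + 1) + int k))) ^ v l))"
    unfolding Q_def d_def .
qed

definition Sym :: "int \<Rightarrow> nat \<Rightarrow> nat \<Rightarrow> nat \<Rightarrow> 'a \<Rightarrow> nat \<Rightarrow> nat \<Rightarrow> 'a" where
  "Sym h r n w Q w1 w2 = (\<Sum>k\<le>n. (of_nat (n choose k) * (- Q) ^ k / (1 - q) ^ n) *
     (\<Prod>l<r. (2 * (1 + q powi (int w1 * int w2 * (h - int (l + 1) + int k)))) /
        ((1 + q powi (int w1 * (h - int (l + 1) + int k))) * (1 + q powi (int w2 * (h - int (l + 1) + int k))))))"

lemma Sym_sym: "Sym h r n w Q w1 w2 = Sym h r n w Q w2 w1"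
  unfolding Sym_def by (simp add: mult_ac)

lemma bracket:
  "(- 1) ^ (\<Sum>l<r. j l) * q powi (int w' * (\<Sum>l<r. (h - int (l + 1)) * int (j l)))
     * (q powi (int w' * int (\<Sum>l<r. j l))) ^ k
   = (\<Prod>l<r. (- (q powi (int w' * (h - int (l + 1) + int k)))) ^ j l)"
proof -
  have "(\<Prod>l<r. (- (q powi (int w' * (h - int (l + 1) + int k)))) ^ j l)
      = (\<Prod>l<r. (- 1) ^ j l * q powi (int w' * (h - int (l + 1) + int k) * int (j l)))"
  proof (intro prod.cong refl)
    fix l
    show "(- (q powi (int w' * (h - int (l + 1) + int k)))) ^ j l =
      (- 1) ^ j l * q powi (int w' * (h - int (l + 1) + int k) * int (j l))"
      using power_minus[of "q powi (int w' * (h - int (l + 1) + int k))" "j l"]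
      by (simp only: power_int_power')
  qed
  also have "\<dots> = (- 1) ^ (\<Sum>l<r. j l) * q powi (\<Sum>l<r. int w' * (h - int (l + 1) + int k) * int (j l))"
    using q_nz by (simp add: prod.distrib power_sum powi_sum)
  also have "(\<Sum>l<r. int w' * (h - int (l + 1) + int k) * int (j l))
      = (\<Sum>l<r. int w' * ((h - int (l + 1)) * int (j l)) + int w' * int k * int (j l))"
    by (intro sum.cong refl) (simp add: algebra_simps)
  also have "\<dots> = int w' * (\<Sum>l<r. (h - int (l + 1)) * int (j l)) + int w' * int (\<Sum>l<r. j l) * int k"
    unfolding sum.distrib by (simp add: sum_distrib_left of_nat_sum mult_ac)
  also have "q powi (int w' * (\<Sum>l<r. (h - int (l + 1)) * int (j l)) + int w' * int (\<Sum>l<r. j l) * int k)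
     = q powi (int w' * (\<Sum>l<r. (h - int (l + 1)) * int (j l))) * (q powi (int w' * int (\<Sum>l<r. j l))) ^ k"
    using q_nz by (simp add: power_int_add power_int_power')
  finally show ?thesis by (simp add: mult_ac)
qed

lemma Side:
  assumes X: "X \<in> Zp nv" and w: "q ^ w \<noteq> 1" "odd w" and q1: "q \<noteq> 1"
  shows "((1 - q ^ w) / (1 - q)) ^ n *
      (\<Sum>j\<in>Pi\<^sub>E {..<r} (\<lambda>_. {..<w}).
         (- 1) ^ (\<Sum>l<r. j l) * q powi (int w' * (\<Sum>l<r. (h - int (l + 1)) * int (j l)))
         * Eq p nv q w h r n (X + of_nat w' * of_nat (\<Sum>l<r. j l)))
    = Sym h r n w (qpow nv q X) w w'"
proof -
  define Q where "Q = qpow nv q X"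
  define d where "d = 1 - q ^ w"
  have d: "d \<noteq> 0" using w unfolding d_def by simp
  have q1': "1 - q \<noteq> 0" using q1 by simp
  define C where "C k = of_nat (n choose k) * (- Q) ^ k / (1 - q) ^ n *
     (\<Prod>l<r. 2 / (1 + q powi (int w * (h - int (l + 1) + int k))))" for k
  define z where "z k l = - (q powi (int w' * (h - int (l + 1) + int k)))" for k l
  have termj: "(d / (1 - q)) ^ n * ((- 1) ^ (\<Sum>l<r. j l) * q powi (int w' * (\<Sum>l<r. (h - int (l + 1)) * int (j l)))
         * Eq p nv q w h r n (X + of_nat w' * of_nat (\<Sum>l<r. j l)))
      = (\<Sum>k\<le>n. C k * (\<Prod>l<r. z k l ^ j l))" for j
  proof -
    define J where "J = (\<Sum>l<r. j l)"
    define E where "E = (\<Sum>l<r. (h - int (l + 1)) * int (j l))"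
    have "X + of_nat w' * of_nat J = X + of_int (int w' * int J)" by simp
    then have Eqj: "Eq p nv q w h r n (X + of_nat w' * of_nat J) =
      (\<Sum>k\<le>n. (of_nat (n choose k) * (- (Q * q powi (int w' * int J))) ^ k / d ^ n)
        * (\<Prod>l<r. 2 / (1 + q powi (int w * (h - int (l + 1) + int k)))))"
      using Eq_closed[OF X, of w h r n "int w' * int J"] unfolding Q_def d_def by simp
    have "(d / (1 - q)) ^ n * ((- 1) ^ J * q powi (int w' * E) * Eq p nv q w h r n (X + of_nat w' * of_nat J))
      = (\<Sum>k\<le>n. C k * ((- 1) ^ J * q powi (int w' * E) * (q powi (int w' * int J)) ^ k))"
      unfolding Eqj C_def sum_distrib_left
    proof (intro sum.cong refl)
      fix k
      have "(- (Q * q powi (int w' * int J))) ^ k = (- Q) ^ k * (q powi (int w' * int J)) ^ k"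
        by (simp add: power_mult_distrib[symmetric])
      show "(d / (1 - q)) ^ n * ((- 1) ^ J * q powi (int w' * E) *
          (of_nat (n choose k) * (- (Q * q powi (int w' * int J))) ^ k / d ^ n *
           (\<Prod>l<r. 2 / (1 + q powi (int w * (h - int (l + 1) + int k))))))
        = of_nat (n choose k) * (- Q) ^ k / (1 - q) ^ n *
          (\<Prod>l<r. 2 / (1 + q powi (int w * (h - int (l + 1) + int k)))) *
          ((- 1) ^ J * q powi (int w' * E) * (q powi (int w' * int J)) ^ k)"
        unfolding \<open>(- (Q * q powi (int w' * int J))) ^ k = _\<close> by (rule aux_alg[OF d q1'])
    qed
    also have "\<dots> = (\<Sum>k\<le>n. C k * (\<Prod>l<r. z k l ^ j l))"
      unfolding J_def E_def z_def bracket ..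
    finally show ?thesis unfolding J_def E_def .
  qed
  have "((1 - q ^ w) / (1 - q)) ^ n *
      (\<Sum>j\<in>Pi\<^sub>E {..<r} (\<lambda>_. {..<w}).
         (- 1) ^ (\<Sum>l<r. j l) * q powi (int w' * (\<Sum>l<r. (h - int (l + 1)) * int (j l)))
         * Eq p nv q w h r n (X + of_nat w' * of_nat (\<Sum>l<r. j l)))
     = (\<Sum>j\<in>Pi\<^sub>E {..<r} (\<lambda>_. {..<w}). \<Sum>k\<le>n. C k * (\<Prod>l<r. z k l ^ j l))"
    unfolding d_def[symmetric] sum_distrib_left[of "(d / (1 - q)) ^ n"] termj ..
  also have "\<dots> = (\<Sum>k\<le>n. C k * (\<Sum>j\<in>Pi\<^sub>E {..<r} (\<lambda>_. {..<w}). \<Prod>l<r. z k l ^ j l))"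
    by (subst sum.swap) (simp only: sum_distrib_left)
  also have "\<dots> = (\<Sum>k\<le>n. C k * (\<Prod>l<r. \<Sum>t<w. z k l ^ t))"
  proof -
    have "(\<Sum>j\<in>Pi\<^sub>E {..<r} (\<lambda>_. {..<w}). \<Prod>l<r. z k l ^ j l) = (\<Prod>l<r. \<Sum>t<w. z k l ^ t)" for k
      by (rule prod_sum_PiE[symmetric]) auto
    then show ?thesis by (simp only:)
  qed
  also have "\<dots> = Sym h r n w Q w w'"
    unfolding Sym_def
  proof (intro sum.cong refl)
    fix k
    have "(\<Sum>t<w. z k l ^ t) = (1 + q powi (int w * int w' * (h - int (l + 1) + int k))) /
         (1 + q powi (int w' * (h - int (l + 1) + int k)))" for l
      unfolding z_def alt_geom[OF w(2)]
      by (simp add: power_int_power' mult_ac)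
    then show "C k * (\<Prod>l<r. \<Sum>t<w. z k l ^ t) =
        of_nat (n choose k) * (- Q) ^ k / (1 - q) ^ n *
        (\<Prod>l<r. 2 * (1 + q powi (int w * int w' * (h - int (l + 1) + int k))) /
          ((1 + q powi (int w * (h - int (l + 1) + int k))) *
           (1 + q powi (int w' * (h - int (l + 1) + int k)))))"
    proof -
      have "C k * (\<Prod>l<r. \<Sum>t<w. z k l ^ t) = of_nat (n choose k) * (- Q) ^ k / (1 - q) ^ n *
        ((\<Prod>l<r. 2 / (1 + q powi (int w * (h - int (l + 1) + int k)))) *
         (\<Prod>l<r. (1 + q powi (int w * int w' * (h - int (l + 1) + int k))) /
         (1 + q powi (int w' * (h - int (l + 1) + int k)))))"
        unfolding C_def \<open>\<And>l. (\<Sum>t<w. z k l ^ t) = _\<close> by (simp only: mult.assoc)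
      also have "(\<Prod>l<r. 2 / (1 + q powi (int w * (h - int (l + 1) + int k)))) *
         (\<Prod>l<r. (1 + q powi (int w * int w' * (h - int (l + 1) + int k))) /
         (1 + q powi (int w' * (h - int (l + 1) + int k))))
        = (\<Prod>l<r. 2 * (1 + q powi (int w * int w' * (h - int (l + 1) + int k))) /
          ((1 + q powi (int w * (h - int (l + 1) + int k))) *
           (1 + q powi (int w' * (h - int (l + 1) + int k)))))"
        unfolding prod.distrib[symmetric] by (intro prod.cong refl) simp
      finally show ?thesis .
    qed
  qed
  finally show ?thesis unfolding Q_def .
qed

lemma Sym_indep: "Sym h r n w Q a b = Sym h r n w' Q a b"
  unfolding Sym_def ..

end

theorem theorem3:
  fixes p :: nat and nv :: "'a::field \<Rightarrow> real" and q x :: 'a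
    and h :: int and r n w1 w2 :: nat
  assumes "prime p" and "odd p" and "is_Cp_model p nv"
    and "nv (1 - q) < 1"
    and "q ^ w1 \<noteq> 1" and "q ^ w2 \<noteq> 1"
    and "odd w1" and "odd w2"
    and "x \<in> Zp nv"
  shows "((1 - q ^ w1) / (1 - q)) ^ n *
      (\<Sum>j\<in>Pi\<^sub>E {..<r} (\<lambda>_. {..<w1}).
         (- 1) ^ (\<Sum>l<r. j l) * q powi (int w2 * (\<Sum>l<r. (h - int (l + 1)) * int (j l)))
         * Eq p nv q w1 h r n (of_nat w1 * of_nat w2 * x + of_nat w2 * of_nat (\<Sum>l<r. j l)))
   = ((1 - q ^ w2) / (1 - q)) ^ n *
      (\<Sum>j\<in>Pi\<^sub>E {..<r} (\<lambda>_. {..<w2}).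
         (- 1) ^ (\<Sum>l<r. j l) * q powi (int w1 * (\<Sum>l<r. (h - int (l + 1)) * int (j l)))
         * Eq p nv q w2 h r n (of_nat w2 * of_nat w1 * x + of_nat w1 * of_nat (\<Sum>l<r. j l)))"
proof -
  interpret cpm p nv q using assms by unfold_locales auto
  have q1: "q \<noteq> 1" using assms(5) by auto
  have X1: "of_nat w1 * of_nat w2 * x \<in> Zp nv"
    using Zp_mult[OF Zp_mult[OF assms(9), of w2], of w1] by (simp add: mult.assoc)
  have X2: "of_nat w2 * of_nat w1 * x \<in> Zp nv"
    using Zp_mult[OF Zp_mult[OF assms(9), of w1], of w2] by (simp add: mult.assoc)
  have e: "(of_nat w2 * of_nat w1 * x :: 'a) = of_nat w1 * of_nat w2 * x" by (simp add: mult_ac)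
  show ?thesis
  proof -
    let ?Q = "qpow nv q (of_nat w1 * of_nat w2 * x)"
    have "Sym h r n w1 ?Q w1 w2 = Sym h r n w1 ?Q w2 w1" by (rule Sym_sym)
    also have "\<dots> = Sym h r n w2 ?Q w2 w1" by (rule Sym_indep)
    finally have S: "Sym h r n w1 ?Q w1 w2 = Sym h r n w2 ?Q w2 w1" .
    show ?thesis
      unfolding Side[OF X1 assms(5) assms(7) q1] Side[OF X2 assms(6) assms(8) q1]
      unfolding e
      by (rule S)
  qed
qed

end
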